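(* Let $G=(V,E)$ be a finite connected directed graph with $(i,j)\in E$ if and only if $(j,i)\in E$, and write $\partial i=\{j\in V:(j,i)\in E\}$. Let $q,q^*:V\to\mathbb{R}$ and let $\phi,\phi^*:E\to\mathbb{R}$ be skew-symmetric ($\phi_{ij}=-\phi_{ji}$, $\phi^*_{ij}=-\phi^*_{ji}$) with $\sum_{j\in\partial i}\phi_{ji}+q_i=0$ and $\sum_{j\in\partial i}\phi^*_{ji}+q^*_i=0$ for all $i\in V$. Let $T\subset V$ be non-empty. If $q_i\ge q_i^*$ for all $i\in V\setminus T$, then for every node $u\in V\setminus T$ there exists a non-intersecting directed path $(i_1,\ldots,i_n)$ in $G$ with $i_1\in T$, $i_n=u$ and $\phi^*_{i_li_{l+1}}\ge\phi_{i_li_{l+1}}$ for all $l=1,\ldots,n-1$. Moreover, if $q_u>q_u^*$, the path can be chosen so that $\phi^*_{i_li_{l+1}}>\phi_{i_li_{l+1}}$ for all $l=1,\ldots,n-1$.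
   Context: A non-intersecting directed path is a sequence of pairwise distinct nodes $(i_1,\ldots,i_n)$ with $(i_l,i_{l+1})\in E$ for each $l$. *)

theory Defs
  imports Complex_Main
begin

definition nonint_path :: "('a \<times> 'a) set \<Rightarrow> 'a list \<Rightarrow> bool" where
  "nonint_path E p \<longleftrightarrow> p \<noteq> [] \<and> distinct p \<and>
     (\<forall>l. Suc l < length p \<longrightarrow> (p ! l, p ! Suc l) \<in> E)"

definition in_nbrs :: "'a set \<Rightarrow> ('a \<times> 'a) set \<Rightarrow> 'a \<Rightarrow> 'a set" where
  "in_nbrs V E i = {j \<in> V. (j, i) \<in> E}"

definition sym_conn_graph :: "'a set \<Rightarrow> ('a \<times> 'a) set \<Rightarrow> bool" where
  "sym_conn_graph V E \<longleftrightarrow> finite V \<and> E \<subseteq> V \<times> V \<and>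
     (\<forall>i j. (i, j) \<in> E \<longleftrightarrow> (j, i) \<in> E) \<and>
     (\<forall>i\<in>V. \<forall>j\<in>V. (i, j) \<in> E\<^sup>*)"

end

theory Submission imports Defs begin

lemma path_ex:
  assumes "(a,b) \<in> F\<^sup>*"
  shows "\<exists>p. p \<noteq> [] \<and> distinct p \<and> hd p = a \<and> last p = b \<and>
     (\<forall>l. Suc l < length p \<longrightarrow> (p!l, p!Suc l) \<in> F)"
  using assms
proof (induction rule: rtrancl_induct)
  case base
  then show ?case by (intro exI[of _ "[a]"]) auto
next
  case (step b c)
  then obtain p where p: "p \<noteq> []" "distinct p" "hd p = a" "last p = b"
    "\<forall>l. Suc l < length p \<longrightarrow> (p!l, p!Suc l) \<in> F" by blast
  show ?case
  proof (cases "c \<in> set p")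
    case True
    then obtain k where k: "k < length p" "p ! k = c" by (metis in_set_conv_nth)
    let ?p = "take (Suc k) p"
    have "?p \<noteq> []" using p(1) by simp
    moreover have "distinct ?p" using p(2) by simp
    moreover have "hd ?p = a" using p(1,3) by (simp add: hd_take)
    moreover have "last ?p = c" using k by (simp add: last_conv_nth min_def take_Suc_conv_app_nth)
    moreover have "\<forall>l. Suc l < length ?p \<longrightarrow> (?p!l, ?p!Suc l) \<in> F"
      using p(5) k by auto
    ultimately show ?thesis by blast
  next
    case False
    let ?p = "p @ [c]"
    have "?p \<noteq> []" by simp
    moreover have "distinct ?p" using p(2) False by simp
    moreover have "hd ?p = a" using p(1,3) by simp
    moreover have "last ?p = c" by simp
    moreover have "\<forall>l. Suc l < length ?p \<longrightarrow> (?p!l, ?p!Suc l) \<in> F"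
    proof (intro allI impI)
      fix l assume l: "Suc l < length ?p"
      show "(?p!l, ?p!Suc l) \<in> F"
      proof (cases "Suc l < length p")
        case True
        then show ?thesis using p(5) by (simp add: nth_append)
      next
        case False
        then have "l = length p - 1" "Suc l = length p" using l by auto
        then show ?thesis using p(1,4) step(2)
          by (simp add: nth_append last_conv_nth)
      qed
    qed
    ultimately show ?thesis by blast
  qed
qed

lemma flux:
  fixes d :: "'a \<Rightarrow> 'a \<Rightarrow> real"
  assumes fin: "finite V" and EV: "E \<subseteq> V \<times> V" and sym: "\<forall>i j. (i, j) \<in> E \<longleftrightarrow> (j, i) \<in> E"
    and sk: "\<forall>(i, j)\<in>E. d i j = - d j i" and U: "U \<subseteq> V"
  shows "(\<Sum>i\<in>U. \<Sum>j\<in>in_nbrs V E i. d j i) = (\<Sum>i\<in>U. \<Sum>j\<in>in_nbrs V E i - U. d j i)"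
proof -
  have finU: "finite U" using fin U finite_subset by blast
  have finN: "\<And>i. finite (in_nbrs V E i)" using fin by (simp add: in_nbrs_def)
  have split: "\<And>i. (\<Sum>j\<in>in_nbrs V E i. d j i) = (\<Sum>j\<in>in_nbrs V E i \<inter> U. d j i) + (\<Sum>j\<in>in_nbrs V E i - U. d j i)"
    using finN by (metis sum.Int_Diff)
  define P where "P = Sigma U (\<lambda>i. in_nbrs V E i \<inter> U)"
  have finP: "finite P" unfolding P_def using finU finN by auto
  have S: "(\<Sum>i\<in>U. \<Sum>j\<in>in_nbrs V E i \<inter> U. d j i) = (\<Sum>(i,j)\<in>P. d j i)"
    unfolding P_def using finU finN by (simp add: sum.Sigma)
  have Pe: "P = {(i,j). i \<in> U \<and> j \<in> U \<and> (j,i) \<in> E}"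
    unfolding P_def in_nbrs_def using U by auto
  have sw: "prod.swap ` P = P" unfolding Pe using sym by (auto simp: image_iff)
  have "(\<Sum>(i,j)\<in>P. d j i) = (\<Sum>x\<in>prod.swap ` P. (\<lambda>(i,j). d j i) x)" using sw by simp
  also have "\<dots> = (\<Sum>(i,j)\<in>P. d i j)"
    by (subst sum.reindex) (auto simp: case_prod_unfold)
  also have "\<dots> = (\<Sum>(i,j)\<in>P. - d j i)"
  proof (rule sum.cong)
    fix x assume "x \<in> P"
    then obtain i j where x: "x = (i,j)" "(j,i) \<in> E" unfolding Pe by auto
    then have "(i,j) \<in> E" using sym by blast
    then show "(case x of (i, j) \<Rightarrow> d i j) = (case x of (i, j) \<Rightarrow> - d j i)" using sk x by auto
  qed simp
  also have "\<dots> = - (\<Sum>(i,j)\<in>P. d j i)" by (simp add: sum_negf case_prod_unfold)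
  finally have "(\<Sum>(i,j)\<in>P. d j i) = 0" by simp
  then show ?thesis using S by (simp add: split sum.distrib)
qed

lemma cross:
  assumes "(a,u) \<in> E\<^sup>*" "a \<notin> U" "u \<in> U"
  shows "\<exists>j i. (j,i) \<in> E \<and> j \<notin> U \<and> i \<in> U"
  using assms by (induction rule: rtrancl_induct) auto

lemma sum_le_mem:
  fixes f :: "'a \<Rightarrow> real"
  assumes "finite A" "x \<in> A" "\<forall>y\<in>A. f y \<le> 0"
  shows "sum f A \<le> f x"
proof -
  have "sum f A = f x + sum f (A - {x})" using assms by (simp add: sum.remove)
  moreover have "sum f (A - {x}) \<le> 0" using assms by (intro sum_nonpos) auto
  ultimately show ?thesis by simp
qed

lemma sum_ge_mem:
  fixes f :: "'a \<Rightarrow> real"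
  assumes "finite A" "x \<in> A" "\<forall>y\<in>A. f y \<ge> 0"
  shows "sum f A \<ge> f x"
proof -
  have "sum f A = f x + sum f (A - {x})" using assms by (simp add: sum.remove)
  moreover have "sum f (A - {x}) \<ge> 0" using assms by (intro sum_nonneg) auto
  ultimately show ?thesis by simp
qed

theorem theorem3:
  fixes V :: "'a set" and E :: "('a \<times> 'a) set"
    and q qs :: "'a \<Rightarrow> real" and \<phi> \<phi>s :: "'a \<Rightarrow> 'a \<Rightarrow> real"
    and T :: "'a set"
  assumes G: "sym_conn_graph V E"
    and skew: "\<forall>(i, j)\<in>E. \<phi> i j = - \<phi> j i"
    and skew_s: "\<forall>(i, j)\<in>E. \<phi>s i j = - \<phi>s j i"
    and cons: "\<forall>i\<in>V. (\<Sum>j\<in>in_nbrs V E i. \<phi> j i) + q i = 0"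
    and cons_s: "\<forall>i\<in>V. (\<Sum>j\<in>in_nbrs V E i. \<phi>s j i) + qs i = 0"
    and T: "T \<subseteq> V" "T \<noteq> {}"
    and dom: "\<forall>i\<in>V - T. q i \<ge> qs i"
  shows "\<forall>u\<in>V - T.
     (\<exists>p. nonint_path E p \<and> hd p \<in> T \<and> last p = u \<and>
          (\<forall>l. Suc l < length p \<longrightarrow> \<phi>s (p ! l) (p ! Suc l) \<ge> \<phi> (p ! l) (p ! Suc l))) \<and>
     (q u > qs u \<longrightarrow>
       (\<exists>p. nonint_path E p \<and> hd p \<in> T \<and> last p = u \<and>
          (\<forall>l. Suc l < length p \<longrightarrow> \<phi>s (p ! l) (p ! Suc l) > \<phi> (p ! l) (p ! Suc l))))"
proof (intro ballI conjI impI)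
  fix u assume u: "u \<in> V - T"
  from G have fin: "finite V" and EV: "E \<subseteq> V \<times> V" and sym: "\<forall>i j. (i, j) \<in> E \<longleftrightarrow> (j, i) \<in> E"
    and conn: "\<forall>i\<in>V. \<forall>j\<in>V. (i, j) \<in> E\<^sup>*"
    unfolding sym_conn_graph_def by auto
  define d where "d = (\<lambda>j i. \<phi>s j i - \<phi> j i)"
  have skd: "\<forall>(i, j)\<in>E. d i j = - d j i" unfolding d_def
  proof (intro ballI, clarify)
    fix i j assume ij: "(i,j) \<in> E"
    have "\<phi> i j = - \<phi> j i" using skew ij by fast
    moreover have "\<phi>s i j = - \<phi>s j i" using skew_s ij by fast
    ultimately show "\<phi>s i j - \<phi> i j = - (\<phi>s j i - \<phi> j i)" by simp
  qed
  have finN: "\<And>i. finite (in_nbrs V E i)" using fin by (simp add: in_nbrs_def)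
  have rr: "\<And>i. i \<in> V \<Longrightarrow> (\<Sum>j\<in>in_nbrs V E i. d j i) = q i - qs i"
  proof -
    fix i assume "i \<in> V"
    then have "(\<Sum>j\<in>in_nbrs V E i. \<phi> j i) = - q i" "(\<Sum>j\<in>in_nbrs V E i. \<phi>s j i) = - qs i"
      using cons cons_s by (auto simp: algebra_simps eq_neg_iff_add_eq_0)
    then show "(\<Sum>j\<in>in_nbrs V E i. d j i) = q i - qs i"
      by (simp add: d_def sum_subtractf)
  qed
  have topath: "\<exists>p. nonint_path E p \<and> hd p \<in> T \<and> last p = u \<and>
          (\<forall>l. Suc l < length p \<longrightarrow> P (d (p ! l) (p ! Suc l)))"
    if aT: "a \<in> T" and au: "(a, u) \<in> {(i,j). (i,j) \<in> E \<and> P (d i j)}\<^sup>*" for a P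
  proof -
    obtain p where p: "p \<noteq> []" "distinct p" "hd p = a" "last p = u"
      "\<forall>l. Suc l < length p \<longrightarrow> (p!l, p!Suc l) \<in> {(i,j). (i,j) \<in> E \<and> P (d i j)}"
      using path_ex[OF au] by blast
    then show ?thesis using aT unfolding nonint_path_def by auto
  qed
  {
    define F where "F = {(i,j). (i,j) \<in> E \<and> (\<lambda>x. x \<ge> (0::real)) (d i j)}"
    define R where "R = {v. \<exists>a\<in>T. (a, v) \<in> F\<^sup>*}"
    define U where "U = V - R"
    have TR: "T \<subseteq> R" unfolding R_def by auto
    have "u \<in> R"
    proof (rule ccontr)
      assume nu: "u \<notin> R"
      have uU: "u \<in> U" using u nu U_def by auto
      have UV: "U \<subseteq> V" "U \<subseteq> V - T" using TR U_def by auto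
      have bd: "d j i < 0" if "i \<in> U" "j \<in> in_nbrs V E i - U" for i j
      proof (rule ccontr)
        assume "\<not> d j i < 0"
        then have "(j,i) \<in> F" using that unfolding F_def in_nbrs_def by auto
        moreover have "j \<in> R" using that unfolding U_def in_nbrs_def by auto
        ultimately have "i \<in> R" unfolding R_def by (auto intro: rtrancl_into_rtrancl)
        then show False using that U_def by auto
      qed
      obtain a where a: "a \<in> T" using T by auto
      have "(a,u) \<in> E\<^sup>*" using conn a T u by auto
      then obtain j i where ji: "(j,i) \<in> E" "j \<notin> U" "i \<in> U"
        using cross[of a u E U] a TR U_def uU by auto
      have jN: "j \<in> in_nbrs V E i - U" using ji EV unfolding in_nbrs_def by auto
      have "(\<Sum>j\<in>in_nbrs V E i - U. d j i) \<le> d j i"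
        proof (rule sum_le_mem)
        show "\<forall>y\<in>in_nbrs V E i - U. d y i \<le> 0" using bd ji(3) by (simp add: less_imp_le)
      qed (use finN jN in auto)
      also have "\<dots> < 0" using bd ji jN by auto
      finally have neg1: "(\<Sum>j\<in>in_nbrs V E i - U. d j i) < 0" .
      have "(\<Sum>i\<in>U. \<Sum>j\<in>in_nbrs V E i - U. d j i) \<le> (\<Sum>j\<in>in_nbrs V E i - U. d j i)"
        using sum_le_mem[of U i "\<lambda>i. \<Sum>j\<in>in_nbrs V E i - U. d j i"] ji fin UV
        by (smt (verit, best) bd finite_subset sum_nonpos)
      then have neg: "(\<Sum>i\<in>U. \<Sum>j\<in>in_nbrs V E i - U. d j i) < 0" using neg1 by simp
      have pos: "(\<Sum>i\<in>U. \<Sum>j\<in>in_nbrs V E i. d j i) \<ge> 0"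
        using rr dom UV by (subst sum.cong[OF refl rr]) (auto intro!: sum_nonneg)
      show False using flux[OF fin EV sym skd UV(1)] neg pos by simp
    qed
    then obtain a where "a \<in> T" "(a,u) \<in> F\<^sup>*" unfolding R_def by auto
    from topath[OF this[unfolded F_def]]
    show "\<exists>p. nonint_path E p \<and> hd p \<in> T \<and> last p = u \<and>
          (\<forall>l. Suc l < length p \<longrightarrow> \<phi>s (p ! l) (p ! Suc l) \<ge> \<phi> (p ! l) (p ! Suc l))"
      by (auto simp: d_def)
  }
  assume qu: "q u > qs u"
  define F where "F = {(i,j). (i,j) \<in> E \<and> (\<lambda>x. x > (0::real)) (d i j)}"
  define R where "R = {v. \<exists>a\<in>T. (a, v) \<in> F\<^sup>*}"
  define U where "U = V - R"
  have TR: "T \<subseteq> R" unfolding R_def by auto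
  have "u \<in> R"
  proof (rule ccontr)
    assume nu: "u \<notin> R"
    have uU: "u \<in> U" using u nu U_def by auto
    have UV: "U \<subseteq> V" "U \<subseteq> V - T" using TR U_def by auto
    have bd: "d j i \<le> 0" if "i \<in> U" "j \<in> in_nbrs V E i - U" for i j
    proof (rule ccontr)
      assume "\<not> d j i \<le> 0"
      then have "(j,i) \<in> F" using that unfolding F_def in_nbrs_def by auto
      moreover have "j \<in> R" using that unfolding U_def in_nbrs_def by auto
      ultimately have "i \<in> R" unfolding R_def by (auto intro: rtrancl_into_rtrancl)
      then show False using that U_def by auto
    qed
    have neg: "(\<Sum>i\<in>U. \<Sum>j\<in>in_nbrs V E i - U. d j i) \<le> 0"
      using bd by (intro sum_nonpos) auto
    have finU: "finite U" using fin UV finite_subset by blast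
    have "(\<Sum>i\<in>U. \<Sum>j\<in>in_nbrs V E i. d j i) \<ge> (\<Sum>j\<in>in_nbrs V E u. d j u)"
    proof (rule sum_ge_mem[OF finU uU])
      show "\<forall>y\<in>U. 0 \<le> (\<Sum>j\<in>in_nbrs V E y. d j y)"
      proof
        fix y assume "y \<in> U"
        then show "0 \<le> (\<Sum>j\<in>in_nbrs V E y. d j y)" using rr dom UV by auto
      qed
    qed
    moreover have "(\<Sum>j\<in>in_nbrs V E u. d j u) > 0" using rr u qu by auto
    ultimately show False using flux[OF fin EV sym skd UV(1)] neg by simp
  qed
  then obtain a where "a \<in> T" "(a,u) \<in> F\<^sup>*" unfolding R_def by auto
  from topath[OF this[unfolded F_def]]
  show "\<exists>p. nonint_path E p \<and> hd p \<in> T \<and> last p = u \<and>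
          (\<forall>l. Suc l < length p \<longrightarrow> \<phi>s (p ! l) (p ! Suc l) > \<phi> (p ! l) (p ! Suc l))"
    by (auto simp: d_def)
qed

end
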